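(* Let $d\ge1$, $\emptyset\ne H\subset\mathbb{R}^d$, $R>0$, and let $x,y\in\mathbb{R}^d$ with $d(x,H)\ge R$ and $d(y,H)\ge R$. Let $f(t):=d(T_tx,T_ty)$ for $t\ge0$. Then for every $0\le t<R$, $f$ is differentiable at $t$ (one-sidedly at $t=0$) and $$-\dot f(t)\le\frac{f(t)}{R-t}.$$
   Context: $d(\cdot,\cdot)$ is Euclidean distance and $d(x,H)=\inf_{z\in H}|x-z|$. Let $\bar H$ be the closure of $H$; for each $x$ let $\pi(x)\in\bar H$ be a point with $|x-\pi(x)|=d(x,H)$ (any one if several). For $t\ge0$, $T_t x:=x+t\frac{\pi(x)-x}{|\pi(x)-x|}$ if $d(x,H)>t$ and $T_t x:=\pi(x)$ if $d(x,H)\le t$. *)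

theory Defs
  imports "HOL-Analysis.Analysis"
begin

definition nearest_selection :: "'a::euclidean_space set \<Rightarrow> ('a \<Rightarrow> 'a) \<Rightarrow> bool" where
  "nearest_selection H proj \<longleftrightarrow>
     (\<forall>x. proj x \<in> closure H \<and> dist x (proj x) = infdist x H)"

definition flowT :: "'a::euclidean_space set \<Rightarrow> ('a \<Rightarrow> 'a) \<Rightarrow> real \<Rightarrow> 'a \<Rightarrow> 'a" where
  "flowT H proj t x =
     (if infdist x H > t then x + (t / norm (proj x - x)) *\<^sub>R (proj x - x) else proj x)"

end

theory Submission
  imports Defs
begin

lemma infdist_le_closure:
  fixes H :: "'a::metric_space set"
  assumes "H \<noteq> {}" "q \<in> closure H"
  shows "infdist z H \<le> dist z q"
proof -
  have "infdist q H = 0" using assms in_closure_iff_infdist_zero by blast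
  then show ?thesis using infdist_triangle[of z H q] by simp
qed

lemma key_ineq:
  fixes N A B ra rb c :: real
  assumes "c > 0" "ra \<ge> c" "rb \<ge> c" "N \<ge> 0"
    and h1: "N - 2*rb*B + rb^2 \<ge> ra^2" and h2: "N + 2*ra*A + ra^2 \<ge> rb^2"
  shows "B - A \<le> N / c"
proof -
  have rb: "rb > 0" "ra > 0" using assms by auto
  have "B \<le> (N + rb^2 - ra^2)/(2*rb)" using h1 rb by (simp add: field_simps)
  moreover have "- A \<le> (N + ra^2 - rb^2)/(2*ra)" using h2 rb by (simp add: field_simps)
  ultimately have "B - A \<le> (N + rb^2 - ra^2)/(2*rb) + (N + ra^2 - rb^2)/(2*ra)" by linarith
  also have "\<dots> = N/(2*rb) + N/(2*ra) - (ra-rb)^2*(ra+rb)/(2*ra*rb)"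
    using rb by (simp add: field_simps power2_eq_square)
  also have "\<dots> \<le> N/(2*rb) + N/(2*ra)"
    using rb by (simp add: divide_nonneg_pos)
  also have "N/(2*rb) \<le> N/(2*c)" using assms by (intro divide_left_mono) auto
  also have "N/(2*ra) \<le> N/(2*c)" using assms by (intro divide_left_mono) auto
  finally show ?thesis by simp
qed

theorem corollary1:
  fixes H :: "'a::euclidean_space set" and proj :: "'a \<Rightarrow> 'a"
    and x y :: 'a and R t :: real
  assumes "H \<noteq> {}"
    and "nearest_selection H proj"
    and "R > 0"
    and "infdist x H \<ge> R" and "infdist y H \<ge> R"
    and "0 \<le> t" and "t < R"
  shows "\<exists>D. ((\<lambda>s. dist (flowT H proj s x) (flowT H proj s y)) has_real_derivative D)
               (at t within {0..})
          \<and> - D \<le> dist (flowT H proj t x) (flowT H proj t y) / (R - t)"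
proof (cases "x = y")
  case True
  then show ?thesis using assms by (intro exI[of _ 0]) auto
next
  case False
  define dx where "dx = infdist x H"
  define dy where "dy = infdist y H"
  define p where "p = proj x"
  define q where "q = proj y"
  have pc: "p \<in> closure H" "dist x p = dx" using assms(2) unfolding nearest_selection_def p_def dx_def by auto
  have qc: "q \<in> closure H" "dist y q = dy" using assms(2) unfolding nearest_selection_def q_def dy_def by auto
  have dxp: "dx > 0" "dy > 0" using assms dx_def dy_def by auto
  define u where "u = (1/dx) *\<^sub>R (p - x)"
  define v where "v = (1/dy) *\<^sub>R (q - y)"
  have npx: "norm (p - x) = dx" using pc by (simp add: dist_norm norm_minus_commute)
  have nqy: "norm (q - y) = dy" using qc by (simp add: dist_norm norm_minus_commute)
  have nu: "norm u = 1" using npx dxp by (simp add: u_def)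
  have nv: "norm v = 1" using nqy dxp by (simp add: v_def)
  have pu: "p = x + dx *\<^sub>R u" using dxp by (simp add: u_def)
  have qv: "q = y + dy *\<^sub>R v" using dxp by (simp add: v_def)
  have fx: "flowT H proj s x = x + s *\<^sub>R u" if "s < R" for s
    using that assms(4) unfolding flowT_def u_def by (simp add: npx dx_def[symmetric] p_def[symmetric])
  have fy: "flowT H proj s y = y + s *\<^sub>R v" if "s < R" for s
    using that assms(5) unfolding flowT_def v_def by (simp add: nqy dy_def[symmetric] q_def[symmetric])
  define w where "w = (x - y) + t *\<^sub>R (u - v)"
  define ra where "ra = dx - t"
  define rb where "rb = dy - t"
  have rab: "ra \<ge> R - t" "rb \<ge> R - t" using assms by (auto simp: ra_def rb_def dx_def dy_def)
  have i1: "dx \<le> dist x q" using infdist_le_closure[OF assms(1) qc(1)] dx_def by simp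
  have i2: "dy \<le> dist y p" using infdist_le_closure[OF assms(1) pc(1)] dy_def by simp
  have "norm (w - rb *\<^sub>R v) \<ge> ra"
  proof -
    have "w - rb *\<^sub>R v = (x - q) + t *\<^sub>R u"
      by (simp add: w_def rb_def qv algebra_simps)
    moreover have "norm ((x - q) + t *\<^sub>R u) \<ge> norm (x - q) - norm (t *\<^sub>R u)"
      by (rule norm_diff_ineq)
    ultimately show ?thesis using i1 nu assms(6) by (simp add: ra_def dist_norm)
  qed
  then have "ra^2 \<le> norm (w - rb *\<^sub>R v) ^ 2"
    using rab assms(7) by (intro power_mono) auto
  also have "norm (w - rb *\<^sub>R v) ^ 2 = norm w ^ 2 - 2*rb*(w \<bullet> v) + rb^2 * (norm v)^2"
    unfolding power2_norm_eq_inner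
    by (simp add: inner_diff_left inner_diff_right inner_commute
        power2_eq_square algebra_simps)
  finally have h1: "norm w ^ 2 - 2*rb*(w \<bullet> v) + rb^2 \<ge> ra^2" using nv by simp
  have "norm (w + ra *\<^sub>R u) \<ge> rb"
  proof -
    have "w + ra *\<^sub>R u = (p - y) - t *\<^sub>R v"
      by (simp add: w_def ra_def pu algebra_simps)
    moreover have "norm ((p - y) - t *\<^sub>R v) \<ge> norm (p - y) - norm (t *\<^sub>R v)"
      by (rule norm_triangle_ineq2)
    ultimately show ?thesis using i2 nv assms(6) by (simp add: rb_def dist_norm norm_minus_commute)
  qed
  then have "rb^2 \<le> norm (w + ra *\<^sub>R u) ^ 2"
    using rab assms(7) by (intro power_mono) auto
  also have "norm (w + ra *\<^sub>R u) ^ 2 = norm w ^ 2 + 2*ra*(w \<bullet> u) + ra^2 * (norm u)^2"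
    unfolding power2_norm_eq_inner
    by (simp add: inner_add_left inner_add_right inner_commute
        power2_eq_square algebra_simps)
  finally have h2: "norm w ^ 2 + 2*ra*(w \<bullet> u) + ra^2 \<ge> rb^2" using nu by simp
  have main: "w \<bullet> v - w \<bullet> u \<le> norm w ^ 2 / (R - t)"
    by (rule key_ineq[OF _ rab _ h1 h2]) (use assms in auto)
  have wnz: "w \<noteq> 0"
  proof
    assume w0: "w = 0"
    have "rb^2 \<ge> ra^2" "ra^2 \<ge> rb^2" using h1 h2 w0 by auto
    then have "ra^2 = rb^2" by linarith
    then have "ra = rb" using rab assms(7) by (simp add: power2_eq_iff)
    show False
    proof (cases "t = 0")
      case True then show False using w0 False by (simp add: w_def)
    next
      case tpos: False
      have dxy: "dx = dy" using \<open>ra = rb\<close> by (simp add: ra_def rb_def)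
      have "x - q = - (t *\<^sub>R u + ra *\<^sub>R v)"
        using w0 by (simp add: w_def qv ra_def dxy algebra_simps)
      then have "norm (t *\<^sub>R u + ra *\<^sub>R v) \<ge> dx" using i1 by (simp only: dist_norm norm_minus_cancel)
      then have "(t *\<^sub>R u + ra *\<^sub>R v) \<bullet> (t *\<^sub>R u + ra *\<^sub>R v) \<ge> (t + ra)^2"
        using dxp by (metis add.commute diff_add_cancel power2_norm_eq_inner power_mono ra_def less_imp_le)
      moreover have uu: "u \<bullet> u = 1" "v \<bullet> v = 1" using nu nv power2_norm_eq_inner[of u] power2_norm_eq_inner[of v] by auto
      ultimately have "t^2 + ra^2 + 2*t*ra*(u \<bullet> v) \<ge> (t + ra)^2"
        by (simp add: inner_add_left inner_add_right inner_commute power2_eq_square algebra_simps)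
      then have "t*ra*(u \<bullet> v) \<ge> t * ra" by (simp add: power2_eq_square algebra_simps)
      moreover have "t * ra > 0" using tpos assms rab by auto
      ultimately have uv: "u \<bullet> v \<ge> 1"
        by (metis mult.right_neutral mult_le_cancel_left_pos)
      have "norm (u - v) ^ 2 = 2 - 2 * (u \<bullet> v)"
        using uu unfolding power2_norm_eq_inner by (simp add: inner_diff_left inner_diff_right inner_commute)
      then have "norm (u - v) ^ 2 \<le> 0" using uv by linarith
      then have "u = v" by simp
      then show False using w0 False by (simp add: w_def)
    qed
  qed
  define D where "D = sgn w \<bullet> (u - v)"
  have "((\<lambda>s. norm ((x - y) + s *\<^sub>R (u - v))) has_real_derivative D) (at t)"
  proof -
    have a: "((\<lambda>s. (x - y) + s *\<^sub>R (u - v)) has_derivative (\<lambda>h. h *\<^sub>R (u - v))) (at t)"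
      by (auto intro!: derivative_eq_intros)
    have b: "(norm has_derivative (\<lambda>h. h \<bullet> sgn w)) (at ((x - y) + t *\<^sub>R (u - v)))"
      using has_derivative_norm[OF wnz] by (simp add: w_def)
    from has_derivative_compose[OF a b] show ?thesis
      unfolding has_field_derivative_def D_def by (simp add: o_def inner_commute mult.commute[of _ "sgn w \<bullet> (u - v)"])
  qed
  then have d1: "((\<lambda>s. norm ((x - y) + s *\<^sub>R (u - v))) has_real_derivative D) (at t within {0..})"
    by (rule has_field_derivative_at_within)
  have d2: "((\<lambda>s. dist (flowT H proj s x) (flowT H proj s y)) has_real_derivative D) (at t within {0..})"
  proof (rule has_field_derivative_transform_within[OF d1, of "R - t"])
    show "0 < R - t" using assms by simp
    show "t \<in> {0..}" using assms by simp
    fix s assume "s \<in> {0..}" "dist s t < R - t"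
    then have "s < R" by (simp add: dist_real_def)
    then show "norm ((x - y) + s *\<^sub>R (u - v)) = dist (flowT H proj s x) (flowT H proj s y)"
      by (simp add: fx fy dist_norm algebra_simps)
  qed
  have ft: "dist (flowT H proj t x) (flowT H proj t y) = norm w"
    using assms by (simp add: fx fy dist_norm w_def algebra_simps)
  have "- D \<le> norm w / (R - t)"
  proof -
    have nw: "norm w > 0" using wnz by simp
    have "- D = (w \<bullet> v - w \<bullet> u) / norm w"
      by (simp add: D_def sgn_div_norm inner_diff_right divide_inverse mult.commute right_diff_distrib)
    also have "\<dots> \<le> (norm w ^ 2 / (R - t)) / norm w"
      using main nw by (intro divide_right_mono) auto
    also have "\<dots> = norm w / (R - t)" using nw by (simp add: power2_eq_square)
    finally show ?thesis .
  qed
  then show ?thesis using d2 ft by auto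
qed

end
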